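(* Let $\mathcal{H}$ be a complex Hilbert space, let $N(\cdot)$ be a norm on $\mathbb{B}(\mathcal{H})$, and let $T\in\mathbb{B}(\mathcal{H})$. Then $$w_{N}(T) \leq \inf_{\varphi \in \mathbb{R}}\sqrt{N^2\big({\rm Re}(e^{i\varphi}T)\big) + N^2\big({\rm Im}(e^{i\varphi}T)\big)}.$$
   Context: $\mathbb{B}(\mathcal{H})$ is the algebra of bounded linear operators on $\mathcal{H}$. For $A\in\mathbb{B}(\mathcal{H})$, ${\rm Re}(A)=\frac{A+A^*}{2}$ and ${\rm Im}(A)=\frac{A-A^*}{2i}$. For a norm $N(\cdot)$ on $\mathbb{B}(\mathcal{H})$, the generalized numerical radius is $w_N(T)=\sup_{\theta\in\mathbb{R}} N\big({\rm Re}(e^{i\theta}T)\big)$. *)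

theory Defs
  imports Complex_Main
begin

class complex_vector = real_vector +
  fixes scaleC :: "complex \<Rightarrow> 'a \<Rightarrow> 'a" (infixr "*\<^sub>C" 75)
  assumes scaleC_add_right: "a *\<^sub>C (x + y) = a *\<^sub>C x + a *\<^sub>C y"
    and scaleC_add_left: "(a + b) *\<^sub>C x = a *\<^sub>C x + b *\<^sub>C x"
    and scaleC_scaleC: "a *\<^sub>C (b *\<^sub>C x) = (a * b) *\<^sub>C x"
    and scaleC_one: "1 *\<^sub>C x = x"
    and scaleR_scaleC: "scaleR r x = (complex_of_real r) *\<^sub>C x"

class complex_inner = complex_vector + real_normed_vector +
  fixes cinner :: "'a \<Rightarrow> 'a \<Rightarrow> complex"
  assumes cinner_commute: "cinner x y = cnj (cinner y x)"
    and cinner_add_left: "cinner (x + y) z = cinner x z + cinner y z"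
    and cinner_scaleC_left: "cinner (r *\<^sub>C x) y = cnj r * cinner x y"
    and cinner_self_real: "Im (cinner x x) = 0"
    and cinner_self_nonneg: "0 \<le> Re (cinner x x)"
    and cinner_self_eq_zero: "cinner x x = 0 \<longleftrightarrow> x = 0"
    and norm_eq_sqrt_cinner: "norm x = sqrt (Re (cinner x x))"

class chilbert_space = complex_inner + complete_space

definition bounded_clinear_op :: "('a::complex_inner \<Rightarrow> 'a) \<Rightarrow> bool" where
  "bounded_clinear_op T \<longleftrightarrow>
     (\<forall>x y. T (x + y) = T x + T y) \<and> (\<forall>c x. T (c *\<^sub>C x) = c *\<^sub>C T x) \<and>
     (\<exists>K. \<forall>x. norm (T x) \<le> norm x * K)"

definition BH :: "('a::complex_inner \<Rightarrow> 'a) set" where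
  "BH = {T. bounded_clinear_op T}"

definition cadj :: "('a::complex_inner \<Rightarrow> 'a) \<Rightarrow> ('a \<Rightarrow> 'a)" where
  "cadj T = (SOME S. \<forall>x y. cinner (S x) y = cinner x (T y))"

definition opRe :: "('a::complex_inner \<Rightarrow> 'a) \<Rightarrow> ('a \<Rightarrow> 'a)" where
  "opRe A = (\<lambda>x. (1/2) *\<^sub>C (A x + cadj A x))"

definition opIm :: "('a::complex_inner \<Rightarrow> 'a) \<Rightarrow> ('a \<Rightarrow> 'a)" where
  "opIm A = (\<lambda>x. (1/(2*\<i>)) *\<^sub>C (A x - cadj A x))"

definition is_norm_on_BH :: "(('a::complex_inner \<Rightarrow> 'a) \<Rightarrow> real) \<Rightarrow> bool" where
  "is_norm_on_BH N \<longleftrightarrow>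
     (\<forall>A\<in>BH. 0 \<le> N A) \<and>
     (\<forall>A\<in>BH. N A = 0 \<longleftrightarrow> A = (\<lambda>_. 0)) \<and>
     (\<forall>A\<in>BH. \<forall>c. N (\<lambda>x. c *\<^sub>C A x) = cmod c * N A) \<and>
     (\<forall>A\<in>BH. \<forall>B\<in>BH. N (\<lambda>x. A x + B x) \<le> N A + N B)"

definition gen_num_radius :: "(('a::complex_inner \<Rightarrow> 'a) \<Rightarrow> real) \<Rightarrow> ('a \<Rightarrow> 'a) \<Rightarrow> real" where
  "gen_num_radius N T = (SUP \<theta>::real. N (opRe (\<lambda>x. exp (\<i> * complex_of_real \<theta>) *\<^sub>C T x)))"

end

theory Submission imports Defs begin

lemma scaleC_zero_left[simp]: "(0::complex) *\<^sub>C (x::'a::complex_vector) = 0"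
proof -
  have "(0::complex) *\<^sub>C x = (0+0) *\<^sub>C x" by simp
  also have "\<dots> = 0 *\<^sub>C x + 0 *\<^sub>C x" by (rule scaleC_add_left)
  finally show ?thesis by simp
qed

lemma scaleC_zero_right[simp]: "c *\<^sub>C (0::'a::complex_vector) = 0"
proof -
  have "c *\<^sub>C (0::'a) = c *\<^sub>C (0+0)" by simp
  also have "\<dots> = c *\<^sub>C 0 + c *\<^sub>C 0" by (rule scaleC_add_right)
  finally show ?thesis by simp
qed

lemma scaleC_minus_one: "(-1) *\<^sub>C (x::'a::complex_vector) = - x"
  using scaleR_scaleC[of "-1" x] by simp

lemma scaleC_minus_left: "(- c) *\<^sub>C (x::'a::complex_vector) = - (c *\<^sub>C x)"
proof -
  have "(- c) *\<^sub>C x = ((-1) * c) *\<^sub>C x" by simp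
  also have "\<dots> = (-1) *\<^sub>C (c *\<^sub>C x)" by (simp only: scaleC_scaleC)
  finally show ?thesis by (simp only: scaleC_minus_one)
qed

lemma scaleC_minus_right: "c *\<^sub>C (- (x::'a::complex_vector)) = - (c *\<^sub>C x)"
proof -
  have "c *\<^sub>C (- x) = c *\<^sub>C ((-1) *\<^sub>C x)" by (simp only: scaleC_minus_one)
  also have "\<dots> = (- c) *\<^sub>C x" by (simp add: scaleC_scaleC)
  finally show ?thesis by (simp only: scaleC_minus_left)
qed

lemma scaleC_diff_right: "c *\<^sub>C ((x::'a::complex_vector) - y) = c *\<^sub>C x - c *\<^sub>C y"
  by (simp only: diff_conv_add_uminus scaleC_add_right scaleC_minus_right)

lemma scaleC_diff_left: "(c - d) *\<^sub>C (x::'a::complex_vector) = c *\<^sub>C x - d *\<^sub>C x"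
  by (simp only: diff_conv_add_uminus scaleC_add_left scaleC_minus_left)

lemma cinner_add_right: "cinner x (y + z) = cinner x y + cinner x (z::'a::complex_inner)"
  by (metis cinner_commute cinner_add_left complex_cnj_add)

lemma cinner_scaleC_right: "cinner x (r *\<^sub>C y) = r * cinner x (y::'a::complex_inner)"
  by (metis cinner_commute cinner_scaleC_left complex_cnj_cnj complex_cnj_mult)

lemma cinner_zero_left[simp]: "cinner 0 (y::'a::complex_inner) = 0"
  using cinner_scaleC_left[of 0 "0::'a" y] by simp

lemma cinner_zero_right[simp]: "cinner x (0::'a::complex_inner) = 0"
  using cinner_scaleC_right[of x 0 "0::'a"] by simp

lemma cinner_minus_left: "cinner (- x) (y::'a::complex_inner) = - cinner x y"
  using cinner_scaleC_left[of "-1" x y] by (simp add: scaleC_minus_one)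

lemma cinner_minus_right: "cinner x (- y::'a::complex_inner) = - cinner x y"
  using cinner_scaleC_right[of x "-1" y] by (simp add: scaleC_minus_one)

lemma cinner_diff_left: "cinner (x - y) (z::'a::complex_inner) = cinner x z - cinner y z"
  by (simp only: diff_conv_add_uminus cinner_add_left cinner_minus_left)

lemma cinner_diff_right: "cinner x (y - z::'a::complex_inner) = cinner x y - cinner x z"
  by (simp only: diff_conv_add_uminus cinner_add_right cinner_minus_right)

lemma cinner_self_norm: "cinner x (x::'a::complex_inner) = complex_of_real ((norm x)\<^sup>2)"
  using cinner_self_real[of x] cinner_self_nonneg[of x] norm_eq_sqrt_cinner[of x]
  by (simp add: complex_eq_iff)

lemma norm_scaleC: "norm (c *\<^sub>C (x::'a::complex_inner)) = cmod c * norm x"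
proof -
  have "cinner (c *\<^sub>C x) (c *\<^sub>C x) = (cnj c * c) * cinner x x"
    by (simp add: cinner_scaleC_left cinner_scaleC_right)
  also have "cnj c * c = complex_of_real ((cmod c)\<^sup>2)" by (metis complex_norm_square mult.commute of_real_power)

  finally have "complex_of_real ((norm (c *\<^sub>C x))\<^sup>2) = complex_of_real ((cmod c)\<^sup>2) * complex_of_real ((norm x)\<^sup>2)"
    by (simp only: cinner_self_norm)
  then have "(norm (c *\<^sub>C x))\<^sup>2 = ((cmod c)\<^sup>2) * (norm x)\<^sup>2"
    by (simp only: of_real_mult[symmetric] of_real_eq_iff)
  then have "(norm (c *\<^sub>C x))\<^sup>2 = (cmod c * norm x)\<^sup>2" by (simp add: power_mult_distrib)
  then show ?thesis by (simp add: power2_eq_iff_nonneg)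
qed

lemma cinner_expand:
  "cinner (x + t *\<^sub>C y) (x + t *\<^sub>C (y::'a::complex_inner)) =
     cinner x x + cnj t * cinner y x + t * cinner x y + cnj t * t * cinner y y"
  by (simp add: cinner_add_left cinner_add_right cinner_scaleC_left cinner_scaleC_right algebra_simps)

lemma cinner_eq_zero_self: "cinner x x = 0 \<Longrightarrow> x = (0::'a::complex_inner)"
  using cinner_self_eq_zero by blast

lemma proj_expand:
  assumes "y \<noteq> 0"
  shows "cinner (x + (- cinner y x / cinner y y) *\<^sub>C y) (x + (- cinner y x / cinner y y) *\<^sub>C (y::'a::complex_inner))
    = cinner x x - complex_of_real ((cmod (cinner y x))\<^sup>2 / (norm y)\<^sup>2)"
proof -
  define a where "a = cinner y y"
  define b where "b = cinner y x"
  define t where "t = - b / a"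
  have ny: "norm y > 0" using assms by simp
  have a: "a = complex_of_real ((norm y)\<^sup>2)" unfolding a_def by (rule cinner_self_norm)
  have "cinner (x + t *\<^sub>C y) (x + t *\<^sub>C y) = cinner x x + cnj t * b + t * cnj b + cnj t * t * a"
    unfolding cinner_expand b_def a_def by (metis cinner_commute)
  also have "\<dots> = cinner x x - complex_of_real ((cmod b)\<^sup>2 / (norm y)\<^sup>2)"
  proof -
    define r where "r = (norm y)\<^sup>2"
    have r: "r \<noteq> 0" using ny unfolding r_def by simp
    have ct: "cnj t = - cnj b / complex_of_real r" unfolding t_def a r_def by simp
    have tt: "t = - b / complex_of_real r" unfolding t_def a r_def by simp
    have bb: "b * cnj b = complex_of_real ((cmod b)\<^sup>2)" by (metis complex_norm_square of_real_power)
    have "cnj t * b + t * cnj b + cnj t * t * a = - (b * cnj b) / complex_of_real r"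
      unfolding ct tt a r_def[symmetric] using r by (simp add: field_simps power2_eq_square)
    then have "cnj t * b + t * cnj b + cnj t * t * a = - complex_of_real ((cmod b)\<^sup>2 / (norm y)\<^sup>2)"
      unfolding bb r_def by (simp only: of_real_divide minus_divide_left)
    then show ?thesis by (simp add: add.assoc)
  qed
  finally show ?thesis unfolding t_def a_def b_def .
qed

lemma cauchy_schwarz: "cmod (cinner x (y::'a::complex_inner)) \<le> norm x * norm y"
proof (cases "y = 0")
  case True then show ?thesis by simp
next
  case False
  define a where "a = cinner y y"
  define b where "b = cinner y x"
  have ny: "norm y > 0" using False by simp
  have a: "a = complex_of_real ((norm y)\<^sup>2)" unfolding a_def by (rule cinner_self_norm)
  define t where "t = - b / a"
  have "0 \<le> Re (cinner (x + t *\<^sub>C y) (x + t *\<^sub>C y))" by (rule cinner_self_nonneg)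
  also have "cinner (x + t *\<^sub>C y) (x + t *\<^sub>C y) = cinner x x + cnj t * b + t * cnj b + cnj t * t * a"
    unfolding cinner_expand b_def a_def by (metis cinner_commute)
  also have "\<dots> = cinner x x - complex_of_real ((cmod b)\<^sup>2 / (norm y)\<^sup>2)"
  proof -
    define r where "r = (norm y)\<^sup>2"
    have r: "r \<noteq> 0" using ny unfolding r_def by simp
    have ct: "cnj t = - cnj b / complex_of_real r" unfolding t_def a r_def by simp
    have tt: "t = - b / complex_of_real r" unfolding t_def a r_def by simp
    have bb: "b * cnj b = complex_of_real ((cmod b)\<^sup>2)" by (metis complex_norm_square of_real_power)
    have "cnj t * b + t * cnj b + cnj t * t * a = - (b * cnj b) / complex_of_real r"
      unfolding ct tt a r_def[symmetric] using r by (simp add: field_simps power2_eq_square)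
    then have "cnj t * b + t * cnj b + cnj t * t * a = - complex_of_real ((cmod b)\<^sup>2 / (norm y)\<^sup>2)"
      unfolding bb r_def by (simp only: of_real_divide minus_divide_left)
    then show ?thesis by (simp add: add.assoc)
  qed
  finally have "(cmod b)\<^sup>2 / (norm y)\<^sup>2 \<le> (norm x)\<^sup>2" by (simp add: cinner_self_norm)
  then have "(cmod b)\<^sup>2 \<le> (norm x * norm y)\<^sup>2" using ny by (simp add: field_simps power_mult_distrib)
  then have "cmod b \<le> norm x * norm y" by (rule power2_le_imp_le) simp
  moreover have "cinner x y = cnj b" unfolding b_def by (rule cinner_commute)
  ultimately show ?thesis by simp
qed


lemma parallelogram: "(norm (x + y))\<^sup>2 + (norm (x - y))\<^sup>2 = 2 * (norm x)\<^sup>2 + 2 * (norm (y::'a::complex_inner))\<^sup>2"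
proof -
  have "cinner (x + y) (x + y) + cinner (x - y) (x - y) = 2 * cinner x x + 2 * cinner y y"
    by (simp only: cinner_add_left cinner_add_right cinner_diff_left cinner_diff_right) (simp add: algebra_simps)
  then have "complex_of_real ((norm (x + y))\<^sup>2 + (norm (x - y))\<^sup>2) = complex_of_real (2 * (norm x)\<^sup>2 + 2 * (norm y)\<^sup>2)"
    by (simp add: cinner_self_norm)
  then show ?thesis by (simp only: of_real_eq_iff)
qed

lemma cinner_ext: "(\<And>y. cinner a y = cinner b y) \<Longrightarrow> a = (b::'a::complex_inner)"
proof -
  assume h: "\<And>y. cinner a y = cinner b y"
  have "cinner (a - b) (a - b) = cinner a (a - b) - cinner b (a - b)" by (rule cinner_diff_left)
  also have "cinner a (a - b) = cinner b (a - b)" by (rule h)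
  finally have "cinner (a - b) (a - b) = 0" by simp
  then have "a - b = 0" by (rule cinner_eq_zero_self)
  then show ?thesis by simp
qed

lemma riesz:
  fixes f :: "'a::chilbert_space \<Rightarrow> complex"
  assumes add: "\<And>x y. f (x + y) = f x + f y" and sc: "\<And>c x. f (c *\<^sub>C x) = c * f x"
    and bd: "\<And>x. cmod (f x) \<le> norm x * C"
  shows "\<exists>w. \<forall>y. f y = cinner w y"
proof (cases "\<forall>x. f x = 0")
  case True
  then show ?thesis by (intro exI[of _ 0]) simp
next
  case False
  then obtain x0 where x0: "f x0 \<noteq> 0" by blast
  have f0: "f 0 = 0" using sc[of 0 0] by simp
  have fdiff: "f (x - y) = f x - f y" for x y
    using add[of "x - y" y] by simp
  define A where "A = {z. f z = 1}"
  have A_ne: "A \<noteq> {}"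
  proof -
    have "f ((1 / f x0) *\<^sub>C x0) = 1" using x0 by (simp add: sc)
    then show ?thesis unfolding A_def by blast
  qed
  define d where "d = Inf (norm ` A)"
  have bdd: "bdd_below (norm ` A)" by (rule bdd_belowI[of _ 0]) auto
  have d_le: "d \<le> norm z" if "z \<in> A" for z
    unfolding d_def using bdd that by (simp add: cInf_lower)
  have d0: "0 \<le> d" unfolding d_def using A_ne by (auto intro: cInf_greatest)
  have "\<forall>n. \<exists>z. z \<in> A \<and> norm z < d + inverse (real (Suc n))"
  proof
    fix n
    have "Inf (norm ` A) < d + inverse (real (Suc n))" unfolding d_def by simp
    then obtain r where "r \<in> norm ` A" "r < d + inverse (real (Suc n))"
      using cInf_lessD[of "norm ` A"] A_ne by blast
    then show "\<exists>z. z \<in> A \<and> norm z < d + inverse (real (Suc n))" by blast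
  qed
  then obtain z where zz: "\<forall>n. z n \<in> A \<and> norm (z n) < d + inverse (real (Suc n))"
    by (rule choice[THEN exE])
  then have zA: "\<And>n. z n \<in> A" and zn: "\<And>n. norm (z n) < d + inverse (real (Suc n))"
    by auto
  have mid: "2 * d \<le> norm (u + v)" if "u \<in> A" "v \<in> A" for u v
  proof -
    have "f ((1/2) *\<^sub>C (u + v)) = 1" using that unfolding A_def by (simp add: sc add)
    then have "d \<le> norm ((1/2) *\<^sub>C (u + v))" using d_le unfolding A_def by blast
    then show ?thesis by (simp add: norm_scaleC)
  qed
  have diffb: "(norm (u - v))\<^sup>2 \<le> 2 * (norm u)\<^sup>2 + 2 * (norm v)\<^sup>2 - 4 * d\<^sup>2" if "u \<in> A" "v \<in> A" for u v
  proof -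
    have "(2 * d)\<^sup>2 \<le> (norm (u + v))\<^sup>2" using mid[OF that] d0 by (intro power_mono) auto
    then show ?thesis using parallelogram[of u v] by (simp add: power_mult_distrib)
  qed
  have zsq: "(norm (z n))\<^sup>2 \<le> d\<^sup>2 + (2 * d + 1) * \<delta>" if "inverse (real (Suc n)) \<le> \<delta>" "\<delta> \<le> 1" for n \<delta>
  proof -
    define e where "e = inverse (real (Suc n))"
    have e0: "0 \<le> e" unfolding e_def by simp
    have "(norm (z n))\<^sup>2 \<le> (d + e)\<^sup>2" using zn[of n] unfolding e_def[symmetric]
      by (intro power_mono) auto
    also have "\<dots> \<le> (d + \<delta>)\<^sup>2" using that e0 d0 unfolding e_def[symmetric] by (intro power_mono) auto
    also have "\<dots> = d\<^sup>2 + 2 * d * \<delta> + \<delta> * \<delta>" by (simp add: power2_eq_square algebra_simps)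
    finally have h: "(norm (z n))\<^sup>2 \<le> d\<^sup>2 + 2 * d * \<delta> + \<delta> * \<delta>" .
    have "0 \<le> \<delta>" using that(1) e0 unfolding e_def by linarith
    then have "\<delta> * \<delta> \<le> 1 * \<delta>" using that(2) by (rule mult_right_mono[rotated])
    then show ?thesis using h by (simp add: algebra_simps)
  qed
  have "Cauchy z"
  proof (rule metric_CauchyI)
    fix e :: real assume e: "0 < e"
    define \<eta> where "\<eta> = min 1 (e\<^sup>2 / (8 * (2 * d + 1)))"
    have eta: "0 < \<eta>" using e d0 unfolding \<eta>_def by simp
    obtain M where M: "M > 0" "inverse (real M) < \<eta>" using ex_inverse_of_nat_less[OF eta] by blast
    have "dist (z m) (z n) < e" if "m \<ge> M" "n \<ge> M" for m n
    proof -
      have i1: "inverse (real (Suc m)) \<le> \<eta>"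
      proof -
        have "inverse (real (Suc m)) \<le> inverse (real M)"
          by (rule le_imp_inverse_le) (use M that in auto)
        then show ?thesis using M by linarith
      qed
      have i2: "inverse (real (Suc n)) \<le> \<eta>"
      proof -
        have "inverse (real (Suc n)) \<le> inverse (real M)"
          by (rule le_imp_inverse_le) (use M that in auto)
        then show ?thesis using M by linarith
      qed
      have e1: "\<eta> \<le> 1" unfolding \<eta>_def by simp
      have "(norm (z m - z n))\<^sup>2 \<le> 2 * (norm (z m))\<^sup>2 + 2 * (norm (z n))\<^sup>2 - 4 * d\<^sup>2"
        using diffb zA by blast
      also have "\<dots> \<le> 4 * ((2 * d + 1) * \<eta>)" using zsq[OF i1 e1] zsq[OF i2 e1] by linarith
      also have "\<dots> = 4 * (2 * d + 1) * \<eta>" by simp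
      also have "\<dots> < e\<^sup>2"
      proof -
        have "\<eta> \<le> e\<^sup>2 / (8 * (2 * d + 1))" unfolding \<eta>_def by simp
        then have "8 * (2 * d + 1) * \<eta> \<le> e\<^sup>2" using d0 by (simp add: field_simps)
        moreover have "0 < e\<^sup>2" using e by simp
        moreover have "0 < (2 * d + 1) * \<eta>" using d0 eta by simp
        ultimately show ?thesis by linarith
      qed
      finally have "(norm (z m - z n))\<^sup>2 < e\<^sup>2" .
      then have "norm (z m - z n) < e" using e by (simp add: power_less_imp_less_base)
      then show ?thesis by (simp add: dist_norm)
    qed
    then show "\<exists>M. \<forall>m\<ge>M. \<forall>n\<ge>M. dist (z m) (z n) < e" by blast
  qed
  then have "convergent z" by (simp add: Cauchy_convergent_iff)
  then obtain zl where lim: "z \<longlonglongrightarrow> zl" unfolding convergent_def by blast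
  have zlA: "f zl = 1"
  proof -
    have "(\<lambda>n. f (z n) - f zl) \<longlonglongrightarrow> 0"
    proof (rule tendsto_0_le[OF LIM_zero[OF lim]])
      show "\<forall>\<^sub>F n in sequentially. norm (f (z n) - f zl) \<le> norm (z n - zl) * C"
        using bd by (simp add: fdiff[symmetric])
    qed
    moreover have "f (z n) = 1" for n using zA[of n] unfolding A_def by simp
    ultimately have "(\<lambda>n. 1 - f zl) \<longlonglongrightarrow> 0" by simp
    then have "1 - f zl = 0" by (simp add: LIMSEQ_const_iff)
    then show ?thesis by simp
  qed
  have zl_min: "norm zl \<le> norm w" if "f w = 1" for w
  proof -
    have "(\<lambda>n. norm (z n)) \<longlonglongrightarrow> norm zl" using lim by (rule tendsto_norm)
    moreover have "(\<lambda>n. d + inverse (real (Suc n))) \<longlonglongrightarrow> d + 0"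
      by (intro tendsto_add tendsto_const LIMSEQ_inverse_real_of_nat)
    ultimately have "norm zl \<le> d + 0"
      by (rule LIMSEQ_le) (use zn less_imp_le in blast)
    then show ?thesis using d_le[of w] that unfolding A_def by simp
  qed
  have orth: "cinner zl k = 0" if "f k = 0" for k
  proof (cases "k = 0")
    case True then show ?thesis by simp
  next
    case False
    define t where "t = - cinner k zl / cinner k k"
    have "f (zl + t *\<^sub>C k) = 1" using zlA that by (simp add: add sc)
    then have "norm zl \<le> norm (zl + t *\<^sub>C k)" by (rule zl_min)
    then have "(norm zl)\<^sup>2 \<le> (norm (zl + t *\<^sub>C k))\<^sup>2" by (simp add: power_mono)
    also have "\<dots> = Re (cinner (zl + t *\<^sub>C k) (zl + t *\<^sub>C k))" by (simp add: cinner_self_norm)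
    also have "\<dots> = (norm zl)\<^sup>2 - (cmod (cinner k zl))\<^sup>2 / (norm k)\<^sup>2"
      unfolding t_def proj_expand[OF False] by (simp add: cinner_self_norm)
    finally have "(cmod (cinner k zl))\<^sup>2 / (norm k)\<^sup>2 \<le> 0" by simp
    then have "(cmod (cinner k zl))\<^sup>2 \<le> 0" using False by (simp add: divide_le_0_iff)
    then have "cinner k zl = 0" by simp
    then show ?thesis by (metis cinner_commute complex_cnj_zero)
  qed
  have zl0: "zl \<noteq> 0" using zlA f0 by auto
  define c where "c = cinner zl zl"
  have c0: "c \<noteq> 0" unfolding c_def using zl0 cinner_self_eq_zero by blast
  have cc: "cnj c = c" unfolding c_def using cinner_commute by metis
  show ?thesis
  proof (intro exI allI)
    fix y
    have "f (y - f y *\<^sub>C zl) = 0" using zlA by (simp add: fdiff sc)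
    then have "cinner zl (y - f y *\<^sub>C zl) = 0" by (rule orth)
    then have "cinner zl y = f y * c" unfolding c_def by (simp add: cinner_diff_right cinner_scaleC_right)
    then show "f y = cinner ((1 / cnj c) *\<^sub>C zl) y"
      using c0 by (simp add: cinner_scaleC_left cc)
  qed
qed


lemma bclin_scale:
  assumes "bounded_clinear_op A"
  shows "bounded_clinear_op (\<lambda>x. c *\<^sub>C A x)"
proof -
  from assms obtain K where ad: "\<And>x y. A (x + y) = A x + A y" and sc: "\<And>d x. A (d *\<^sub>C x) = d *\<^sub>C A x"
    and K: "\<And>x. norm (A x) \<le> norm x * K" unfolding bounded_clinear_op_def by blast
  have "norm (c *\<^sub>C A x) \<le> norm x * (cmod c * K)" for x
    using mult_left_mono[OF K[of x], of "cmod c"] by (simp add: norm_scaleC mult_ac)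
  moreover have "c *\<^sub>C A (d *\<^sub>C x) = d *\<^sub>C (c *\<^sub>C A x)" for d x
    by (simp add: sc scaleC_scaleC mult.commute)
  ultimately show ?thesis unfolding bounded_clinear_op_def by (auto simp: ad scaleC_add_right)
qed

lemma bclin_add:
  assumes "bounded_clinear_op A" "bounded_clinear_op B"
  shows "bounded_clinear_op (\<lambda>x. A x + B x)"
proof -
  from assms(1) obtain K where ad: "\<And>x y. A (x + y) = A x + A y" and sc: "\<And>d x. A (d *\<^sub>C x) = d *\<^sub>C A x"
    and K: "\<And>x. norm (A x) \<le> norm x * K" unfolding bounded_clinear_op_def by blast
  from assms(2) obtain L where ad2: "\<And>x y. B (x + y) = B x + B y" and sc2: "\<And>d x. B (d *\<^sub>C x) = d *\<^sub>C B x"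
    and L: "\<And>x. norm (B x) \<le> norm x * L" unfolding bounded_clinear_op_def by blast
  have b: "\<forall>x. norm (A x + B x) \<le> norm x * (K + L)"
  proof
    fix x
    have "norm (A x + B x) \<le> norm (A x) + norm (B x)" by (rule norm_triangle_ineq)
    also have "\<dots> \<le> norm x * K + norm x * L" using K[of x] L[of x] by (rule add_mono)
    finally show "norm (A x + B x) \<le> norm x * (K + L)" by (simp add: distrib_left)
  qed
  have l1: "\<forall>x y. A (x + y) + B (x + y) = (A x + B x) + (A y + B y)" by (simp add: ad ad2 algebra_simps)
  have l2: "\<forall>c x. A (c *\<^sub>C x) + B (c *\<^sub>C x) = c *\<^sub>C (A x + B x)" by (simp add: sc sc2 scaleC_add_right)
  show ?thesis by (simp only: bounded_clinear_op_def) (use l1 l2 b in blast)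
qed

lemma bclin_diff:
  assumes "bounded_clinear_op A" "bounded_clinear_op B"
  shows "bounded_clinear_op (\<lambda>x. A x - B x)"
proof -
  have "bounded_clinear_op (\<lambda>x. A x + (-1) *\<^sub>C B x)"
    by (intro bclin_add bclin_scale assms)
  then show ?thesis by (simp add: scaleC_minus_one)
qed

lemma adj_exists:
  fixes T :: "'a::chilbert_space \<Rightarrow> 'a"
  assumes "bounded_clinear_op T"
  shows "\<forall>x y. cinner (cadj T x) y = cinner x (T y)"
proof -
  from assms obtain K where ad: "\<And>x y. T (x + y) = T x + T y" and sc: "\<And>d x. T (d *\<^sub>C x) = d *\<^sub>C T x"
    and K: "\<And>x. norm (T x) \<le> norm x * K" unfolding bounded_clinear_op_def by blast
  have "\<forall>x. \<exists>w. \<forall>y. cinner w y = cinner x (T y)"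
  proof
    fix x
    have "\<exists>w. \<forall>y. cinner x (T y) = cinner w y"
    proof (rule riesz)
      fix y
      have "cmod (cinner x (T y)) \<le> norm x * norm (T y)" by (rule cauchy_schwarz)
      also have "\<dots> \<le> norm x * (norm y * K)" by (rule mult_left_mono[OF K]) simp
      finally show "cmod (cinner x (T y)) \<le> norm y * (norm x * K)" by (simp add: mult_ac)
    qed (simp_all add: ad sc cinner_add_right cinner_scaleC_right)
    then obtain w where w: "\<forall>y. cinner x (T y) = cinner w y" by blast
    show "\<exists>w. \<forall>y. cinner w y = cinner x (T y)" using w by auto
  qed
  then have "\<exists>S. \<forall>x y. cinner (S x) y = cinner x (T y)" by (rule choice)
  then show ?thesis unfolding cadj_def by (rule someI_ex)
qed

lemma adj_bclin:
  fixes S :: "'a::chilbert_space \<Rightarrow> 'a"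
  assumes S: "bounded_clinear_op S"
  shows "bounded_clinear_op (cadj S)"
proof -
  have P: "\<And>x y. cinner (cadj S x) y = cinner x (S y)" using adj_exists[OF S] by blast
  from S obtain K where K: "\<And>x. norm (S x) \<le> norm x * K" unfolding bounded_clinear_op_def by blast
  have ad: "cadj S (x + y) = cadj S x + cadj S y" for x y
    by (rule cinner_ext) (simp add: P cinner_add_left)
  have sc: "cadj S (c *\<^sub>C x) = c *\<^sub>C cadj S x" for c x
    by (rule cinner_ext) (simp add: P cinner_scaleC_left)
  have bd: "norm (cadj S x) \<le> norm x * K" for x
  proof (cases "cadj S x = 0")
    case True
    have n0: "norm (cadj S x) = 0" using True by simp
    have "0 \<le> norm x * K"
    proof (cases "x = 0")
      case False
      show ?thesis using K[of x] norm_ge_zero order_trans by blast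
    qed simp
    then show ?thesis using n0 by simp
  next
    case False
    have "(norm (cadj S x))\<^sup>2 = Re (cinner (cadj S x) (cadj S x))" by (simp add: cinner_self_norm)
    also have "\<dots> = Re (cinner x (S (cadj S x)))" by (simp add: P)
    also have "\<dots> \<le> cmod (cinner x (S (cadj S x)))" by (rule complex_Re_le_cmod)
    also have "\<dots> \<le> norm x * norm (S (cadj S x))" by (rule cauchy_schwarz)
    also have "\<dots> \<le> norm x * (norm (cadj S x) * K)" by (rule mult_left_mono[OF K]) simp
    finally have "norm (cadj S x) * norm (cadj S x) \<le> (norm x * K) * norm (cadj S x)"
      by (simp add: power2_eq_square mult_ac)
    then show ?thesis using False by simp
  qed
  show ?thesis unfolding bounded_clinear_op_def using ad sc bd by blast
qed

lemma adj_scale: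
  fixes S :: "'a::chilbert_space \<Rightarrow> 'a"
  assumes S: "bounded_clinear_op S"
  shows "cadj (\<lambda>x. u *\<^sub>C S x) x = cnj u *\<^sub>C cadj S x"
proof -
  have P: "\<And>x y. cinner (cadj S x) y = cinner x (S y)" using adj_exists[OF S] by blast
  have P2: "\<And>x y. cinner (cadj (\<lambda>x. u *\<^sub>C S x) x) y = cinner x (u *\<^sub>C S y)"
    using adj_exists[OF bclin_scale[OF S]] by blast
  show ?thesis
    by (rule cinner_ext) (simp add: P P2 cinner_scaleC_left cinner_scaleC_right)
qed

lemma opRe_bclin:
  fixes S :: "'a::chilbert_space \<Rightarrow> 'a"
  assumes S: "bounded_clinear_op S"
  shows "bounded_clinear_op (opRe S)"
  unfolding opRe_def by (intro bclin_scale bclin_add S adj_bclin)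

lemma opIm_bclin:
  fixes S :: "'a::chilbert_space \<Rightarrow> 'a"
  assumes S: "bounded_clinear_op S"
  shows "bounded_clinear_op (opIm S)"
  unfolding opIm_def by (intro bclin_scale bclin_diff S adj_bclin)

lemma collect2: "p1 *\<^sub>C a + q1 *\<^sub>C b + (p2 *\<^sub>C a - q2 *\<^sub>C b) = (p1 + p2) *\<^sub>C a + (q1 - q2) *\<^sub>C (b::'a::complex_vector)"
  by (simp add: scaleC_add_left scaleC_diff_left algebra_simps)

lemma opRe_rot:
  fixes S :: "'a::chilbert_space \<Rightarrow> 'a"
  assumes S: "bounded_clinear_op S"
  shows "opRe (\<lambda>x. u *\<^sub>C S x) x =
    complex_of_real (Re u) *\<^sub>C opRe S x + complex_of_real (- Im u) *\<^sub>C opIm S x"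
proof -
  define a where "a = S x"
  define b where "b = cadj S x"
  have L: "opRe (\<lambda>x. u *\<^sub>C S x) x = (u / 2) *\<^sub>C a + (cnj u / 2) *\<^sub>C b"
    unfolding opRe_def adj_scale[OF S] a_def b_def
    by (simp add: scaleC_add_right scaleC_scaleC)
  have R: "complex_of_real (Re u) *\<^sub>C opRe S x + complex_of_real (- Im u) *\<^sub>C opIm S x
     = (complex_of_real (Re u) / 2 + complex_of_real (- Im u) / (2 * \<i>)) *\<^sub>C a
       + (complex_of_real (Re u) / 2 - complex_of_real (- Im u) / (2 * \<i>)) *\<^sub>C b"
    unfolding opRe_def opIm_def a_def[symmetric] b_def[symmetric]
    by (simp only: scaleC_add_right scaleC_diff_right scaleC_scaleC collect2) (simp add: mult_ac)
  have c1: "complex_of_real (Re u) / 2 + complex_of_real (- Im u) / (2 * \<i>) = u / 2"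
    by (simp add: complex_eq_iff)
  have c2: "complex_of_real (Re u) / 2 - complex_of_real (- Im u) / (2 * \<i>) = cnj u / 2"
    by (simp add: complex_eq_iff)
  show ?thesis unfolding L R c1 c2 ..
qed

lemma trig_bound:
  fixes a b c s :: real
  assumes "0 \<le> a" "0 \<le> b" "c\<^sup>2 + s\<^sup>2 = 1"
  shows "\<bar>c\<bar> * a + \<bar>s\<bar> * b \<le> sqrt (a\<^sup>2 + b\<^sup>2)"
proof (rule real_le_rsqrt)
  have "(\<bar>c\<bar> * a + \<bar>s\<bar> * b)\<^sup>2 + (\<bar>c\<bar> * b - \<bar>s\<bar> * a)\<^sup>2 = (c\<^sup>2 + s\<^sup>2) * (a\<^sup>2 + b\<^sup>2)"
    by (simp add: power2_eq_square algebra_simps abs_mult_self_eq)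
  moreover have "(c\<^sup>2 + s\<^sup>2) * (a\<^sup>2 + b\<^sup>2) = a\<^sup>2 + b\<^sup>2" using assms(3) by simp
  moreover have "0 \<le> (\<bar>c\<bar> * b - \<bar>s\<bar> * a)\<^sup>2" by simp
  ultimately show "(\<bar>c\<bar> * a + \<bar>s\<bar> * b)\<^sup>2 \<le> a\<^sup>2 + b\<^sup>2" by linarith
qed


theorem theorem2p1:
  fixes N :: "('h::chilbert_space \<Rightarrow> 'h) \<Rightarrow> real" and T :: "'h \<Rightarrow> 'h"
  assumes "is_norm_on_BH N" and "T \<in> BH"
  shows "gen_num_radius N T \<le>
    (INF \<phi>::real. sqrt ((N (opRe (\<lambda>x. exp (\<i> * complex_of_real \<phi>) *\<^sub>C T x)))\<^sup>2
                        + (N (opIm (\<lambda>x. exp (\<i> * complex_of_real \<phi>) *\<^sub>C T x)))\<^sup>2))"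
proof -
  have Nnn: "\<And>A. A \<in> BH \<Longrightarrow> 0 \<le> N A"
    and Nsc: "\<And>A c. A \<in> BH \<Longrightarrow> N (\<lambda>x. c *\<^sub>C A x) = cmod c * N A"
    and Ntr: "\<And>A B. A \<in> BH \<Longrightarrow> B \<in> BH \<Longrightarrow> N (\<lambda>x. A x + B x) \<le> N A + N B"
    using assms(1) unfolding is_norm_on_BH_def by blast+
  have TB: "bounded_clinear_op T" using assms(2) unfolding BH_def by simp
  show ?thesis
  proof (rule cINF_greatest)
    fix \<phi> :: real
    define S where "S = (\<lambda>x. exp (\<i> * complex_of_real \<phi>) *\<^sub>C T x)"
    have SB: "bounded_clinear_op S" unfolding S_def by (rule bclin_scale[OF TB])
    define R where "R = N (opRe S)"
    define I where "I = N (opIm S)"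
    have ReB: "opRe S \<in> BH" using opRe_bclin[OF SB] unfolding BH_def by simp
    have ImB: "opIm S \<in> BH" using opIm_bclin[OF SB] unfolding BH_def by simp
    show "gen_num_radius N T \<le> sqrt ((N (opRe (\<lambda>x. exp (\<i> * complex_of_real \<phi>) *\<^sub>C T x)))\<^sup>2
                        + (N (opIm (\<lambda>x. exp (\<i> * complex_of_real \<phi>) *\<^sub>C T x)))\<^sup>2)"
      unfolding gen_num_radius_def S_def[symmetric] R_def[symmetric] I_def[symmetric]
    proof (rule cSUP_least)
      fix \<theta> :: real
      define u where "u = exp (\<i> * complex_of_real (\<theta> - \<phi>))"
      have eq: "(\<lambda>x. exp (\<i> * complex_of_real \<theta>) *\<^sub>C T x) = (\<lambda>x. u *\<^sub>C S x)"
      proof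
        fix x
        have "exp (\<i> * complex_of_real \<theta>) = u * exp (\<i> * complex_of_real \<phi>)"
          unfolding u_def by (simp add: exp_add[symmetric] algebra_simps)
        then show "exp (\<i> * complex_of_real \<theta>) *\<^sub>C T x = u *\<^sub>C S x"
          unfolding S_def by (simp add: scaleC_scaleC)
      qed
      define A where "A = (\<lambda>x. complex_of_real (Re u) *\<^sub>C opRe S x)"
      define B where "B = (\<lambda>x. complex_of_real (- Im u) *\<^sub>C opIm S x)"
      have AB: "opRe (\<lambda>x. u *\<^sub>C S x) = (\<lambda>x. A x + B x)"
        unfolding A_def B_def by (rule ext) (rule opRe_rot[OF SB])
      have AinB: "A \<in> BH" unfolding A_def BH_def using bclin_scale[OF opRe_bclin[OF SB]] by simp
      have BinB: "B \<in> BH" unfolding B_def BH_def using bclin_scale[OF opIm_bclin[OF SB]] by simp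
      have "N (opRe (\<lambda>x. exp (\<i> * complex_of_real \<theta>) *\<^sub>C T x)) = N (\<lambda>x. A x + B x)"
        unfolding eq AB ..
      also have "\<dots> \<le> N A + N B" by (rule Ntr[OF AinB BinB])
      also have "\<dots> = \<bar>Re u\<bar> * R + \<bar>Im u\<bar> * I"
        unfolding A_def B_def R_def I_def by (simp add: Nsc[OF ReB] Nsc[OF ImB])
      also have "\<dots> \<le> sqrt (R\<^sup>2 + I\<^sup>2)"
      proof (rule trig_bound)
        show "0 \<le> R" unfolding R_def by (rule Nnn[OF ReB])
        show "0 \<le> I" unfolding I_def by (rule Nnn[OF ImB])
        have "cmod u = 1" unfolding u_def by simp
        then show "(Re u)\<^sup>2 + (Im u)\<^sup>2 = 1" using cmod_power2[of u] by simp
      qed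
      finally show "N (opRe (\<lambda>x. exp (\<i> * complex_of_real \<theta>) *\<^sub>C T x)) \<le> sqrt (R\<^sup>2 + I\<^sup>2)" .
    qed simp
  qed simp
qed

end
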